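(* Fix $m\in\mathbb N$ and $\xi\in\mathbb R^m$, and let $\rho=\sqrt{\log m+1}\,\|\xi\|$. For every integer $k\geq1$ with $k\geq 2m\rho$, $$\Big|\big(\widehat{e^{2\operatorname{Im}g_+}}\big)_k\Big|\leq 2e^{\rho}\frac{\rho^{\lceil k/m\rceil}}{\lceil k/m\rceil!}.$$
   Context: $g_+(\theta)=\sum_{j=1}^m\frac{\xi_j}{\sqrt j}e^{ij\theta}$, so $\operatorname{Im}g_+(\theta)=\sum_{j=1}^m\frac{\xi_j}{\sqrt j}\sin j\theta$. For a function $c$ on $[-\pi,\pi]$, $\hat c_k=\frac1{2\pi}\int_{-\pi}^{\pi}c(\theta)e^{-ik\theta}d\theta$. $\log$ is natural. *)

theory Defs
  imports "HOL-Analysis.Analysis"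
begin

definition g_plus :: "nat \<Rightarrow> (nat \<Rightarrow> real) \<Rightarrow> real \<Rightarrow> complex" where
  "g_plus m \<xi> \<theta> = (\<Sum>j=1..m. complex_of_real (\<xi> j / sqrt (real j)) * exp (\<i> * of_nat j * complex_of_real \<theta>))"

definition fourier_coeff :: "(real \<Rightarrow> complex) \<Rightarrow> int \<Rightarrow> complex" where
  "fourier_coeff c k = complex_of_real (1 / (2 * pi)) *
     integral {-pi..pi} (\<lambda>\<theta>. c \<theta> * exp (- (\<i> * of_int k * complex_of_real \<theta>)))"

definition vec_norm :: "nat \<Rightarrow> (nat \<Rightarrow> real) \<Rightarrow> real" where
  "vec_norm m \<xi> = sqrt (\<Sum>j=1..m. (\<xi> j)^2)"

end

theory Submission
  imports Defs
begin

lemma exp_int_integral: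
  fixes n :: int assumes "n \<noteq> 0"
  shows "((\<lambda>\<theta>::real. exp (\<i> * of_int n * of_real \<theta>)) has_integral 0) {-pi..pi}"
proof -
  have d: "((\<lambda>x::real. exp (\<i> * of_int n * of_real x) / (\<i> * of_int n)) has_vector_derivative exp (\<i> * of_int n * of_real x)) (at x within {-pi..pi})" for x
  proof -
    have g: "((\<lambda>z. exp (\<i> * of_int n * z) / (\<i> * of_int n)) has_field_derivative exp (\<i> * of_int n * of_real x)) (at (of_real x) within of_real ` {-pi..pi})"
      using assms by (auto intro!: derivative_eq_intros)
    have f: "((\<lambda>x::real. complex_of_real x) has_vector_derivative 1) (at x within {-pi..pi})"
      by (auto intro!: derivative_eq_intros)
    from field_vector_diff_chain_within[OF f g] show ?thesis by (simp add: o_def)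
  qed
  have "((\<lambda>\<theta>::real. exp (\<i> * of_int n * of_real \<theta>)) has_integral
      (exp (\<i> * of_int n * of_real pi) / (\<i> * of_int n) - exp (\<i> * of_int n * of_real (-pi)) / (\<i> * of_int n))) {-pi..pi}"
    by (rule fundamental_theorem_of_calculus) (use d in auto)
  moreover have "exp (\<i> * of_int n * of_real pi) = exp (\<i> * of_int n * of_real (-pi))"
  proof -
    have "exp (\<i> * of_int n * of_real pi) = exp (\<i> * of_int n * of_real (-pi)) * exp ((2 * of_int n * pi) * \<i>)"
    proof -
      have "\<i> * of_int n * of_real pi = \<i> * of_int n * of_real (-pi) + (2 * of_int n * pi) * \<i>"
        by (simp add: algebra_simps)
      then show ?thesis by (metis exp_add)
    qed
    also have "exp ((2 * of_int n * pi) * \<i>) = 1"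
      by (rule exp_integer_2pi) simp
    finally show ?thesis by simp
  qed
  ultimately show ?thesis by simp
qed

inductive tpl :: "int \<Rightarrow> (real \<Rightarrow> complex) \<Rightarrow> bool" for d where
  tpl_exp: "s \<le> d \<Longrightarrow> tpl d (\<lambda>\<theta>. c * exp (\<i> * of_int s * of_real \<theta>))"
| tpl_add: "tpl d f \<Longrightarrow> tpl d g \<Longrightarrow> tpl d (\<lambda>\<theta>. f \<theta> + g \<theta>)"

lemma tpl_mono: "tpl d f \<Longrightarrow> d \<le> d' \<Longrightarrow> tpl d' f"
  by (induction rule: tpl.induct) (auto intro: tpl.intros)

lemma tpl_zero: "tpl d (\<lambda>_. 0)"
  using tpl_exp[of d d 0] by simp

lemma tpl_const: "tpl 0 (\<lambda>_. c)"
  using tpl_exp[of 0 0 c] by simp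

lemma tpl_mult: "tpl d1 f \<Longrightarrow> tpl d2 g \<Longrightarrow> tpl (d1 + d2) (\<lambda>\<theta>. f \<theta> * g \<theta>)"
proof (induction rule: tpl.induct)
  case (tpl_exp s c)
  from tpl_exp.prems tpl_exp.hyps show ?case
  proof (induction rule: tpl.induct)
    case (tpl_exp s' c')
    have "tpl (d1 + d2) (\<lambda>\<theta>. (c * c') * exp (\<i> * of_int (s + s') * of_real \<theta>))"
      by (rule tpl.tpl_exp) (use tpl_exp in simp)
    moreover have "(\<lambda>\<theta>. (c * c') * exp (\<i> * of_int (s + s') * of_real \<theta>)) =
       (\<lambda>\<theta>. c * exp (\<i> * of_int s * of_real \<theta>) * (c' * exp (\<i> * of_int s' * of_real \<theta>)))"
      by (auto simp: algebra_simps exp_add[symmetric])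
    ultimately show ?case by simp
  next
    case (tpl_add f g)
    then show ?case by (auto simp: distrib_left intro: tpl.tpl_add)
  qed
next
  case (tpl_add f g)
  then show ?case by (auto simp: distrib_right intro: tpl.tpl_add)
qed

lemma tpl_sum: "finite A \<Longrightarrow> (\<And>x. x \<in> A \<Longrightarrow> tpl d (f x)) \<Longrightarrow> tpl d (\<lambda>\<theta>. \<Sum>x\<in>A. f x \<theta>)"
  by (induction rule: finite_induct) (auto intro: tpl_zero tpl_add)

lemma tpl_pow: "0 \<le> d \<Longrightarrow> tpl d f \<Longrightarrow> tpl (int n * d) (\<lambda>\<theta>. f \<theta> ^ n)"
proof (induction n)
  case 0
  then show ?case using tpl_const[of 1] by simp
next
  case (Suc n)
  have "tpl (d + int n * d) (\<lambda>\<theta>. f \<theta> * f \<theta> ^ n)"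
    using Suc by (intro tpl_mult) auto
  then show ?case by (simp add: algebra_simps)
qed

lemma tpl_scale: "tpl d f \<Longrightarrow> tpl d (\<lambda>\<theta>. c * f \<theta>)"
  using tpl_mult[OF tpl_const[of c]] by simp

lemma tpl_cont: "tpl d f \<Longrightarrow> continuous_on S f"
  by (induction rule: tpl.induct) (auto intro!: continuous_intros)

lemma tpl_int0:
  assumes "tpl d f" "d < k"
  shows "integral {-pi..pi} (\<lambda>\<theta>. f \<theta> * exp (- (\<i> * of_int k * of_real \<theta>))) = 0"
  using assms
proof (induction rule: tpl.induct)
  case (tpl_exp s c)
  have e: "(\<lambda>\<theta>. c * exp (\<i> * of_int s * of_real \<theta>) * exp (- (\<i> * of_int k * of_real \<theta>)))
     = (\<lambda>\<theta>. c * exp (\<i> * of_int (s - k) * of_real \<theta>))"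
    by (auto simp: algebra_simps exp_add[symmetric] exp_diff[symmetric])
  have "((\<lambda>\<theta>. c * exp (\<i> * of_int (s - k) * of_real \<theta>)) has_integral c * 0) {-pi..pi}"
    by (intro has_integral_mult_right exp_int_integral) (use tpl_exp in simp)
  then show ?case unfolding e by (metis integral_unique mult_zero_right)
next
  case (tpl_add f g)
  have i: "(\<lambda>\<theta>. h \<theta> * exp (- (\<i> * of_int k * of_real \<theta>))) integrable_on {-pi..pi}" if "tpl d h" for h
    by (rule integrable_continuous_interval) (use tpl_cont[OF that] in \<open>auto intro!: continuous_intros\<close>)
  have "integral {-pi..pi} (\<lambda>\<theta>. (f \<theta> + g \<theta>) * exp (- (\<i> * of_int k * of_real \<theta>)))
     = integral {-pi..pi} (\<lambda>\<theta>. f \<theta> * exp (- (\<i> * of_int k * of_real \<theta>)) + g \<theta> * exp (- (\<i> * of_int k * of_real \<theta>)))"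
    by (simp add: distrib_right)
  also have "\<dots> = 0" using tpl_add i by (simp add: integral_add)
  finally show ?case .
qed

lemma harm_bound: "m \<ge> 1 \<Longrightarrow> (\<Sum>j=1..m. 1 / real j) \<le> ln (real m) + 1"
proof (induction m rule: dec_induct)
  case base then show ?case by simp
next
  case (step n)
  have "ln (real n / real (Suc n)) \<le> real n / real (Suc n) - 1"
    by (rule ln_le_minus_one) (use step in auto)
  also have "\<dots> = - 1 / real (Suc n)" by (simp add: field_simps)
  finally have "1 / real (Suc n) \<le> ln (real (Suc n)) - ln (real n)"
    using step by (simp add: ln_div)
  then show ?case using step by simp
qed

lemma P_bound:
  assumes "m \<ge> 1"
  shows "cmod (g_plus m \<xi> \<theta>) \<le> sqrt (ln (real m) + 1) * vec_norm m \<xi>"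
proof -
  have "cmod (g_plus m \<xi> \<theta>) \<le> (\<Sum>j=1..m. cmod (complex_of_real (\<xi> j / sqrt (real j)) * exp (\<i> * of_nat j * complex_of_real \<theta>)))"
    unfolding g_plus_def by (rule norm_sum)
  also have "\<dots> = (\<Sum>j=1..m. \<bar>\<xi> j\<bar> * (1 / sqrt (real j)))"
    by (intro sum.cong refl) (simp add: norm_divide norm_mult norm_exp_eq_Re)
  also have "\<dots> \<le> sqrt ((\<Sum>j=1..m. (\<bar>\<xi> j\<bar>)\<^sup>2) * (\<Sum>j=1..m. (1 / sqrt (real j))\<^sup>2))"
    by (rule real_le_rsqrt) (rule Cauchy_Schwarz_ineq_sum)
  also have "(\<Sum>j=1..m. (1 / sqrt (real j))\<^sup>2) = (\<Sum>j=1..m. 1 / real j)"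
    by (intro sum.cong refl) (simp add: power_divide)
  also have "sqrt ((\<Sum>j=1..m. (\<bar>\<xi> j\<bar>)\<^sup>2) * (\<Sum>j=1..m. 1 / real j)) \<le> sqrt ((\<Sum>j=1..m. (\<xi> j)\<^sup>2) * (ln (real m) + 1))"
    using harm_bound[OF assms] by (auto intro!: real_sqrt_le_mono mult_left_mono sum_nonneg)
  also have "\<dots> = sqrt (ln (real m) + 1) * vec_norm m \<xi>"
    by (simp add: vec_norm_def real_sqrt_mult)
  finally show ?thesis .
qed

definition tl :: "real \<Rightarrow> nat \<Rightarrow> real" where
  "tl r M = (\<Sum>q. r ^ (q + M) / fact (q + M))"

lemma tl_summable: "summable (\<lambda>q. (r::real) ^ (q + M) / fact (q + M))"
proof -
  have "summable (\<lambda>n. r ^ n /\<^sub>R fact n)" by (rule summable_exp_generic)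
  then have "summable (\<lambda>n. r ^ n / fact n)" by (simp add: divide_inverse mult.commute)
  then show ?thesis by (rule summable_ignore_initial_segment)
qed

lemma exp_rem_bound:
  fixes z :: complex
  assumes "cmod z \<le> r"
  shows "cmod (exp z - (\<Sum>q<M. z ^ q /\<^sub>R fact q)) \<le> tl r M"
proof -
  have s: "summable (\<lambda>n. z ^ n /\<^sub>R fact n)" by (rule summable_exp_generic)
  have "exp z - (\<Sum>q<M. z ^ q /\<^sub>R fact q) = (\<Sum>n. z ^ (n + M) /\<^sub>R fact (n + M))"
    unfolding exp_def using suminf_minus_initial_segment[OF s, of M] by simp
  also have "cmod \<dots> \<le> tl r M"
    unfolding tl_def
  proof (rule norm_suminf_le[OF _ tl_summable])
    fix n
    have "cmod z ^ (n + M) \<le> r ^ (n + M)" by (rule power_mono) (use assms in auto)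
    then have "cmod z ^ (n + M) / fact (n + M) \<le> r ^ (n + M) / fact (n + M)"
      by (rule divide_right_mono) auto
    then show "cmod (z ^ (n + M) /\<^sub>R fact (n + M)) \<le> r ^ (n + M) / fact (n + M)"
      by (simp add: norm_power divide_inverse_commute)
  qed
  finally show ?thesis .
qed

lemma tl_tendsto: "tl r \<longlonglongrightarrow> 0"
proof -
  have s: "summable (\<lambda>n. r ^ n / fact n :: real)" using tl_summable[of r 0] by simp
  have "(\<lambda>M. (\<Sum>n. r ^ n / fact n) - (\<Sum>i<M. r ^ i / fact i)) \<longlonglongrightarrow> (\<Sum>n. r ^ n / fact n) - (\<Sum>n. r ^ n / fact n)"
    by (intro tendsto_intros summable_LIMSEQ s)
  moreover have "tl r = (\<lambda>M. (\<Sum>n. r ^ n / fact n) - (\<Sum>i<M. r ^ i / fact i))"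
    unfolding tl_def using suminf_minus_initial_segment[OF s] by (auto simp: fun_eq_iff)
  ultimately show ?thesis by simp
qed

lemma tl_bound:
  assumes "0 \<le> r" "2 * r \<le> real N"
  shows "tl r N \<le> 2 * (r ^ N / fact N)"
proof -
  have t: "r ^ (q + N) / fact (q + N) \<le> r ^ N / fact N * (1/2) ^ q" for q
  proof (induction q)
    case 0 then show ?case by simp
  next
    case (Suc q)
    have "r ^ (Suc q + N) / fact (Suc q + N) = r ^ (q + N) / fact (q + N) * (r / real (Suc (q + N)))"
      by (simp add: field_simps)
    also have "\<dots> \<le> r ^ N / fact N * (1/2) ^ q * (1/2)"
    proof (rule mult_mono[OF Suc])
      show "r / real (Suc (q + N)) \<le> 1/2" using assms by (simp add: field_simps)
    qed (use assms in auto)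
    finally show ?case by simp
  qed
  have "tl r N \<le> (\<Sum>q. r ^ N / fact N * (1/2) ^ q)"
    unfolding tl_def
    by (intro suminf_le t tl_summable summable_mult summable_geometric) auto
  also have "\<dots> = r ^ N / fact N * 2"
    by (subst suminf_mult) (auto simp: suminf_geometric)
  finally show ?thesis by (simp add: mult.commute)
qed


lemma tpl_P: "tpl (int m) (g_plus m \<xi>)"
proof -
  have "tpl (int m) (\<lambda>\<theta>. \<Sum>j=1..m. complex_of_real (\<xi> j / sqrt (real j)) * exp (\<i> * of_int (int j) * complex_of_real \<theta>))"
    by (intro tpl_sum tpl_exp) auto
  then show ?thesis unfolding g_plus_def[abs_def] by simp
qed

lemma tpl_cP: "tpl 0 (\<lambda>\<theta>. cnj (g_plus m \<xi> \<theta>))"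
proof -
  have "tpl 0 (\<lambda>\<theta>. \<Sum>j=1..m. complex_of_real (\<xi> j / sqrt (real j)) * exp (\<i> * of_int (- int j) * complex_of_real \<theta>))"
    by (intro tpl_sum tpl_exp) auto
  moreover have "cnj (g_plus m \<xi> \<theta>) = (\<Sum>j=1..m. complex_of_real (\<xi> j / sqrt (real j)) * exp (\<i> * of_int (- int j) * complex_of_real \<theta>))" for \<theta>
    unfolding g_plus_def by (simp add: exp_cnj)
  ultimately show ?thesis by simp
qed

lemma fc_split:
  fixes k :: int
  assumes "continuous_on {-pi..pi} f" "continuous_on {-pi..pi} g" "continuous_on {-pi..pi} h"
  shows "integral {-pi..pi} (\<lambda>\<theta>. (f \<theta> + g \<theta> + h \<theta>) * exp (- (\<i> * of_int k * of_real \<theta>)))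
    = integral {-pi..pi} (\<lambda>\<theta>. f \<theta> * exp (- (\<i> * of_int k * of_real \<theta>)))
    + integral {-pi..pi} (\<lambda>\<theta>. g \<theta> * exp (- (\<i> * of_int k * of_real \<theta>)))
    + integral {-pi..pi} (\<lambda>\<theta>. h \<theta> * exp (- (\<i> * of_int k * of_real \<theta>)))"
proof -
  have i: "(\<lambda>\<theta>. u \<theta> * exp (- (\<i> * of_int k * of_real \<theta>))) integrable_on {-pi..pi}"
    if "continuous_on {-pi..pi} u" for u
    by (rule integrable_continuous_interval) (use that in \<open>auto intro!: continuous_intros\<close>)
  show ?thesis
    using i[OF assms(1)] i[OF assms(2)] i[OF assms(3)]
    by (simp add: distrib_right integral_add integrable_add)
qed

lemma int_bound:
  assumes "continuous_on {-pi..pi} f" "\<And>\<theta>. cmod (f \<theta>) \<le> B"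
  shows "cmod (integral {-pi..pi} (\<lambda>\<theta>. f \<theta> * exp (- (\<i> * of_int k * of_real \<theta>)))) \<le> B * (2 * pi)"
proof -
  have "cmod (integral {-pi..pi} (\<lambda>\<theta>. f \<theta> * exp (- (\<i> * of_int k * of_real \<theta>)))) \<le> B * (pi - - pi)"
    by (rule integral_bound) (use assms in \<open>auto intro!: continuous_intros simp: norm_mult norm_exp_eq_Re\<close>)
  then show ?thesis by simp
qed


theorem lemma2p2:
  fixes m :: nat and \<xi> :: "nat \<Rightarrow> real" and k :: int and \<rho> :: real
  assumes "m \<ge> 1"
    and "\<rho> = sqrt (ln (real m) + 1) * vec_norm m \<xi>"
    and "k \<ge> 1"
    and "real_of_int k \<ge> 2 * real m * \<rho>"
  shows "cmod (fourier_coeff (\<lambda>\<theta>. complex_of_real (exp (2 * Im (g_plus m \<xi> \<theta>)))) k)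
           \<le> 2 * exp \<rho> * \<rho> ^ nat \<lceil>real_of_int k / real m\<rceil> / fact (nat \<lceil>real_of_int k / real m\<rceil>)"
proof -
  define P where "P = g_plus m \<xi>"
  define N where "N = nat \<lceil>real_of_int k / real m\<rceil>"
  define w where "w = (\<lambda>\<theta>. - \<i> * P \<theta>)"
  define v where "v = (\<lambda>\<theta>. \<i> * cnj (P \<theta>))"
  define T where "T = (\<lambda>\<theta>. \<Sum>p<N. w \<theta> ^ p /\<^sub>R fact p)"
  define U where "U = (\<lambda>M \<theta>. \<Sum>q<M. v \<theta> ^ q /\<^sub>R fact q)"
  define E where "E = (\<lambda>\<theta>. exp (- (\<i> * of_int k * complex_of_real \<theta>)))"
  define C where "C = (\<Sum>p<N. \<rho> ^ p / fact p)"
  have Pb: "cmod (P \<theta>) \<le> \<rho>" for \<theta>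
    unfolding P_def assms(2) by (rule P_bound[OF assms(1)])
  have \<rho>0: "0 \<le> \<rho>" using Pb[of 0] norm_ge_zero order_trans by blast
  have wb: "cmod (w \<theta>) \<le> \<rho>" for \<theta> using Pb[of \<theta>] by (simp add: w_def norm_mult)
  have vb: "cmod (v \<theta>) \<le> \<rho>" for \<theta> using Pb[of \<theta>] by (simp add: v_def norm_mult)
  have km: "real_of_int k / real m > 0" using assms by auto
  have N1: "real N \<ge> real_of_int k / real m" unfolding N_def using km by linarith
  have N2: "real N - 1 < real_of_int k / real m" unfolding N_def using km by linarith
  have N3: "N \<ge> 1" unfolding N_def using km by linarith
  have twoN: "2 * \<rho> \<le> real N"
  proof -
    have "2 * \<rho> \<le> real_of_int k / real m" using assms(1,4) by (simp add: field_simps)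
    then show ?thesis using N1 by linarith
  qed
  have Dk: "int (N - 1) * int m < k"
  proof -
    have "real (N - 1) * real m < real_of_int k" using N2 N3 assms(1) by (simp add: field_simps of_nat_diff)
    then show ?thesis by (metis of_int_less_iff of_int_of_nat_eq of_nat_mult of_int_mult)
  qed
  have tw: "tpl (int m) w" unfolding w_def P_def by (rule tpl_scale[OF tpl_P])
  have tv: "tpl 0 v" unfolding v_def P_def by (rule tpl_scale[OF tpl_cP])
  have tT: "tpl (int (N - 1) * int m) T"
    unfolding T_def
  proof (intro tpl_sum)
    fix p assume p: "p \<in> {..<N}"
    have "tpl (int p * int m) (\<lambda>\<theta>. of_real (1 / fact p) * w \<theta> ^ p)"
      by (intro tpl_scale tpl_pow tw) auto
    moreover have "int p * int m \<le> int (N - 1) * int m" using p by (intro mult_right_mono) auto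
    ultimately have "tpl (int (N - 1) * int m) (\<lambda>\<theta>. of_real (1 / fact p) * w \<theta> ^ p)"
      by (rule tpl_mono)
    then show "tpl (int (N - 1) * int m) (\<lambda>\<theta>. w \<theta> ^ p /\<^sub>R fact p)"
      by (simp add: scaleR_conv_of_real divide_inverse mult.commute)
  qed auto
  have tU: "tpl 0 (U M)" for M
    unfolding U_def
  proof (intro tpl_sum)
    fix q
    have "tpl (int q * 0) (\<lambda>\<theta>. of_real (1 / fact q) * v \<theta> ^ q)"
      by (intro tpl_scale tpl_pow tv) auto
    then show "tpl 0 (\<lambda>\<theta>. v \<theta> ^ q /\<^sub>R fact q)"
      by (simp add: scaleR_conv_of_real divide_inverse mult.commute)
  qed auto
  have tTU: "tpl (int (N - 1) * int m) (\<lambda>\<theta>. T \<theta> * U M \<theta>)" for M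
    using tpl_mult[OF tT tU[of M]] by simp
  have cT: "continuous_on {-pi..pi} T" by (rule tpl_cont[OF tT])
  have cU: "continuous_on {-pi..pi} (U M)" for M by (rule tpl_cont[OF tU])
  have cw: "continuous_on {-pi..pi} w" by (rule tpl_cont[OF tw])
  have cv: "continuous_on {-pi..pi} v" by (rule tpl_cont[OF tv])
  have F: "complex_of_real (exp (2 * Im (P \<theta>))) = exp (w \<theta>) * exp (v \<theta>)" for \<theta>
  proof -
    have "w \<theta> + v \<theta> = complex_of_real (2 * Im (P \<theta>))"
      by (simp add: w_def v_def complex_eq_iff)
    then show ?thesis by (metis exp_add exp_of_real)
  qed
  have dec: "complex_of_real (exp (2 * Im (P \<theta>))) = T \<theta> * U M \<theta> + T \<theta> * (exp (v \<theta>) - U M \<theta>) + (exp (w \<theta>) - T \<theta>) * exp (v \<theta>)" for \<theta> M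
    unfolding F by (simp add: algebra_simps)
  have Tb: "cmod (T \<theta>) \<le> C" for \<theta>
    unfolding T_def C_def
  proof (rule order_trans[OF norm_sum], rule sum_mono)
    fix p
    have "cmod (w \<theta>) ^ p / fact p \<le> \<rho> ^ p / fact p"
      by (intro divide_right_mono power_mono wb) auto
    then show "cmod (w \<theta> ^ p /\<^sub>R fact p) \<le> \<rho> ^ p / fact p"
      by (simp add: norm_power divide_inverse_commute)
  qed
  have C0: "0 \<le> C" unfolding C_def using \<rho>0 by (auto intro!: sum_nonneg)
  have main: "cmod (fourier_coeff (\<lambda>\<theta>. complex_of_real (exp (2 * Im (P \<theta>)))) k) \<le> exp \<rho> * tl \<rho> N + C * tl \<rho> M" for M
  proof -
    have "integral {-pi..pi} (\<lambda>\<theta>. complex_of_real (exp (2 * Im (P \<theta>))) * E \<theta>)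
      = integral {-pi..pi} (\<lambda>\<theta>. (T \<theta> * U M \<theta> + T \<theta> * (exp (v \<theta>) - U M \<theta>) + (exp (w \<theta>) - T \<theta>) * exp (v \<theta>)) * E \<theta>)"
      by (simp only: dec[of _ M])
    also have "\<dots> = integral {-pi..pi} (\<lambda>\<theta>. (T \<theta> * U M \<theta>) * E \<theta>)
       + integral {-pi..pi} (\<lambda>\<theta>. (T \<theta> * (exp (v \<theta>) - U M \<theta>)) * E \<theta>)
       + integral {-pi..pi} (\<lambda>\<theta>. ((exp (w \<theta>) - T \<theta>) * exp (v \<theta>)) * E \<theta>)"
      unfolding E_def
      by (rule fc_split) (use cT cU cw cv in \<open>auto intro!: continuous_intros\<close>)
    also have "integral {-pi..pi} (\<lambda>\<theta>. (T \<theta> * U M \<theta>) * E \<theta>) = 0"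
      unfolding E_def by (rule tpl_int0[OF tTU Dk])
    finally have eq: "integral {-pi..pi} (\<lambda>\<theta>. complex_of_real (exp (2 * Im (P \<theta>))) * E \<theta>) =
       integral {-pi..pi} (\<lambda>\<theta>. (T \<theta> * (exp (v \<theta>) - U M \<theta>)) * E \<theta>)
       + integral {-pi..pi} (\<lambda>\<theta>. ((exp (w \<theta>) - T \<theta>) * exp (v \<theta>)) * E \<theta>)" by simp
    have b1: "cmod (integral {-pi..pi} (\<lambda>\<theta>. (T \<theta> * (exp (v \<theta>) - U M \<theta>)) * E \<theta>)) \<le> (C * tl \<rho> M) * (2 * pi)"
      unfolding E_def
    proof (rule int_bound)
      show "continuous_on {-pi..pi} (\<lambda>\<theta>. T \<theta> * (exp (v \<theta>) - U M \<theta>))"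
        using cT cU cv by (auto intro!: continuous_intros)
      fix \<theta>
      have "cmod (exp (v \<theta>) - U M \<theta>) \<le> tl \<rho> M" unfolding U_def by (rule exp_rem_bound[OF vb])
      then show "cmod (T \<theta> * (exp (v \<theta>) - U M \<theta>)) \<le> C * tl \<rho> M"
        unfolding norm_mult using C0 by (intro mult_mono Tb) auto
    qed
    have b2: "cmod (integral {-pi..pi} (\<lambda>\<theta>. ((exp (w \<theta>) - T \<theta>) * exp (v \<theta>)) * E \<theta>)) \<le> (tl \<rho> N * exp \<rho>) * (2 * pi)"
      unfolding E_def
    proof (rule int_bound)
      show "continuous_on {-pi..pi} (\<lambda>\<theta>. (exp (w \<theta>) - T \<theta>) * exp (v \<theta>))"
        using cT cw cv by (auto intro!: continuous_intros)
      fix \<theta>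
      have "cmod (exp (w \<theta>) - T \<theta>) \<le> tl \<rho> N" unfolding T_def by (rule exp_rem_bound[OF wb])
      moreover have "cmod (exp (v \<theta>)) \<le> exp \<rho>"
        unfolding norm_exp_eq_Re using complex_Re_le_cmod[of "v \<theta>"] vb[of \<theta>] by simp
      ultimately show "cmod ((exp (w \<theta>) - T \<theta>) * exp (v \<theta>)) \<le> tl \<rho> N * exp \<rho>"
        unfolding norm_mult by (intro mult_mono) (auto intro: order_trans[OF norm_ge_zero])
    qed
    have "cmod (integral {-pi..pi} (\<lambda>\<theta>. complex_of_real (exp (2 * Im (P \<theta>))) * E \<theta>))
      \<le> (C * tl \<rho> M) * (2 * pi) + (tl \<rho> N * exp \<rho>) * (2 * pi)"
      unfolding eq by (rule order_trans[OF norm_triangle_ineq add_mono[OF b1 b2]])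
    then have h: "cmod (integral {-pi..pi} (\<lambda>\<theta>. complex_of_real (exp (2 * Im (P \<theta>))) * E \<theta>))
      \<le> (exp \<rho> * tl \<rho> N + C * tl \<rho> M) * (2 * pi)" by (simp add: algebra_simps)
    have "fourier_coeff (\<lambda>\<theta>. complex_of_real (exp (2 * Im (P \<theta>)))) k =
       complex_of_real (1 / (2 * pi)) * integral {-pi..pi} (\<lambda>\<theta>. complex_of_real (exp (2 * Im (P \<theta>))) * E \<theta>)"
      unfolding fourier_coeff_def E_def by simp
    then have "cmod (fourier_coeff (\<lambda>\<theta>. complex_of_real (exp (2 * Im (P \<theta>)))) k) =
       (1 / (2 * pi)) * cmod (integral {-pi..pi} (\<lambda>\<theta>. complex_of_real (exp (2 * Im (P \<theta>))) * E \<theta>))"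
      by (simp add: norm_mult norm_divide)
    also have "\<dots> \<le> (1 / (2 * pi)) * ((exp \<rho> * tl \<rho> N + C * tl \<rho> M) * (2 * pi))"
      by (rule mult_left_mono[OF h]) auto
    also have "\<dots> = exp \<rho> * tl \<rho> N + C * tl \<rho> M" by simp
    finally show ?thesis .
  qed
  have lim: "(\<lambda>M. exp \<rho> * tl \<rho> N + C * tl \<rho> M) \<longlonglongrightarrow> exp \<rho> * tl \<rho> N + C * 0"
    by (intro tendsto_intros tl_tendsto)
  have "cmod (fourier_coeff (\<lambda>\<theta>. complex_of_real (exp (2 * Im (P \<theta>)))) k) \<le> exp \<rho> * tl \<rho> N"
    using tendsto_le[OF trivial_limit_sequentially lim tendsto_const] main by simp
  also have "\<dots> \<le> exp \<rho> * (2 * (\<rho> ^ N / fact N))"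
    by (intro mult_left_mono tl_bound \<rho>0 twoN) auto
  finally show ?thesis unfolding P_def N_def by (simp add: mult.assoc mult.left_commute)
qed

end
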